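(* Let $k\geq 2$ and let $G=G_1\square G_2 \square \cdots \square G_k$ be a Cartesian prime factorization of $G$ into mutually non-isomorphic connected graphs. For $i=1,\ldots,k$ let $Q_i=G_1\square\cdots\square G_{i-1}\square G_{i+1}\square\cdots\square G_k$, so $|Q_i|=|G|/|G_i|$. Then $$\theta (G)=\max \left\{ \left(\theta(G_i)-1\right)\cdot |Q_i|\; : \; i=1,\dots,k \right\}+1.$$
   Context: Graphs are finite and simple; $|H|$ denotes the number of vertices of $H$. A vertex coloring of a graph is distinguishing if the identity is the only automorphism preserving it (mapping every vertex to a vertex of the same color). The distinguishing threshold $\theta(H)$ of a graph $H$ is the minimum number $t$ such that for every $k\geq t$, every vertex coloring of $H$ using $k$ colors is distinguishing. The Cartesian product $G\square H$ has vertex set $V(G)\times V(H)$, with $(g,h)\sim(g',h')$ iff either $g=g'$ and $hh'\in E(H)$, or $gg'\in E(G)$ and $h=h'$; a graph is prime (with respect to the Cartesian product) if it is not isomorphic to a Cartesian product of two graphs both non-isomorphic to it. *)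

theory Defs
  imports "HOL-Library.FuncSet"
begin

type_synonym 'a graph = "'a set \<times> 'a set set"

definition verts :: "'a graph \<Rightarrow> 'a set" where "verts G = fst G"
definition edges :: "'a graph \<Rightarrow> 'a set set" where "edges G = snd G"

definition graph :: "'a graph \<Rightarrow> bool" where
  "graph G \<longleftrightarrow> finite (verts G) \<and>
     (\<forall>e\<in>edges G. \<exists>u v. e = {u, v} \<and> u \<noteq> v \<and> u \<in> verts G \<and> v \<in> verts G)"

definition adj :: "'a graph \<Rightarrow> 'a \<Rightarrow> 'a \<Rightarrow> bool" where
  "adj G u v \<longleftrightarrow> {u, v} \<in> edges G"

definition connected_graph :: "'a graph \<Rightarrow> bool" where
  "connected_graph G \<longleftrightarrow> verts G \<noteq> {} \<and>
     (\<forall>u\<in>verts G. \<forall>v\<in>verts G. (adj G)\<^sup>*\<^sup>* u v)"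

definition graph_iso :: "'a graph \<Rightarrow> 'b graph \<Rightarrow> ('a \<Rightarrow> 'b) \<Rightarrow> bool" where
  "graph_iso G H f \<longleftrightarrow> bij_betw f (verts G) (verts H) \<and>
     (\<forall>u\<in>verts G. \<forall>v\<in>verts G. adj G u v \<longleftrightarrow> adj H (f u) (f v))"

definition isomorphic :: "'a graph \<Rightarrow> 'b graph \<Rightarrow> bool" where
  "isomorphic G H \<longleftrightarrow> (\<exists>f. graph_iso G H f)"

definition automorphism :: "'a graph \<Rightarrow> ('a \<Rightarrow> 'a) \<Rightarrow> bool" where
  "automorphism G f \<longleftrightarrow> graph_iso G G f"

definition coloring_with :: "'a graph \<Rightarrow> ('a \<Rightarrow> nat) \<Rightarrow> nat \<Rightarrow> bool" where
  "coloring_with G c k \<longleftrightarrow> card (c ` verts G) = k"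

definition distinguishing :: "'a graph \<Rightarrow> ('a \<Rightarrow> nat) \<Rightarrow> bool" where
  "distinguishing G c \<longleftrightarrow>
     (\<forall>f. automorphism G f \<and> (\<forall>v\<in>verts G. c (f v) = c v) \<longrightarrow> (\<forall>v\<in>verts G. f v = v))"

definition dist_threshold :: "'a graph \<Rightarrow> nat" where
  "dist_threshold G = (LEAST t. t \<ge> 1 \<and>
     (\<forall>k\<ge>t. \<forall>c. coloring_with G c k \<longrightarrow> distinguishing G c))"

definition cart_prod :: "'a graph \<Rightarrow> 'b graph \<Rightarrow> ('a \<times> 'b) graph" where
  "cart_prod G H = (verts G \<times> verts H,
     {{(g, h), (g', h')} | g h g' h'.
        (g = g' \<and> g \<in> verts G \<and> {h, h'} \<in> edges H) \<or>
        ({g, g'} \<in> edges G \<and> h = h' \<and> h \<in> verts H)})"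

text \<open>Factors of a finite graph H have at most |H| vertices,
  so it suffices to let them range over graphs on the vertex type of H.\<close>
definition prime_graph :: "'a graph \<Rightarrow> bool" where
  "prime_graph (H :: 'a graph) \<longleftrightarrow> \<not> (\<exists>(A :: 'a graph) (B :: 'a graph). graph A \<and> graph B \<and>
       isomorphic H (cart_prod A B) \<and> \<not> isomorphic A H \<and> \<not> isomorphic B H)"

definition cart_prod_family :: "(nat \<Rightarrow> 'a graph) \<Rightarrow> nat set \<Rightarrow> (nat \<Rightarrow> 'a) graph" where
  "cart_prod_family Gs I = (PiE I (\<lambda>i. verts (Gs i)),
     {{x, y} | x y. x \<in> PiE I (\<lambda>i. verts (Gs i)) \<and> y \<in> PiE I (\<lambda>i. verts (Gs i)) \<and>
        (\<exists>i\<in>I. {x i, y i} \<in> edges (Gs i) \<and> (\<forall>j\<in>I. j \<noteq> i \<longrightarrow> x j = y j))})"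

end

theory Submission
  imports Defs "HOL-Library.Nat_Bijection"
begin

lemma graph_adjD: "graph H \<Longrightarrow> adj H u v \<Longrightarrow> u \<in> verts H \<and> v \<in> verts H \<and> u \<noteq> v"
  unfolding graph_def adj_def by (auto simp: doubleton_eq_iff)

lemma adj_sym: "adj H u v = adj H v u"
  unfolding adj_def by (simp add: insert_commute)

lemma iso_comp: "graph_iso A B f \<Longrightarrow> graph_iso B C g \<Longrightarrow> graph_iso A C (g \<circ> f)"
  unfolding graph_iso_def by (auto simp: bij_betw_trans bij_betw_apply)

lemma iso_inv: "graph_iso A B f \<Longrightarrow> graph_iso B A (inv_into (verts A) f)"
  unfolding graph_iso_def
proof (intro conjI ballI)
  assume h: "bij_betw f (verts A) (verts B) \<and> (\<forall>u\<in>verts A. \<forall>v\<in>verts A. adj A u v = adj B (f u) (f v))"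
  then show "bij_betw (inv_into (verts A) f) (verts B) (verts A)" by (simp add: bij_betw_inv_into)
  fix u v assume "u \<in> verts B" "v \<in> verts B"
  then show "adj B u v = adj A (inv_into (verts A) f u) (inv_into (verts A) f v)"
  proof -
    obtain u' v' where "u' \<in> verts A" "v' \<in> verts A" "u = f u'" "v = f v'"
      using h \<open>u \<in> verts B\<close> \<open>v \<in> verts B\<close> unfolding bij_betw_def by blast
    moreover have "inj_on f (verts A)" using h bij_betw_def by blast
    ultimately show ?thesis using h by simp
  qed
qed

lemma isomorphic_trans: "isomorphic A B \<Longrightarrow> isomorphic B C \<Longrightarrow> isomorphic A C"
  unfolding isomorphic_def using iso_comp by blast

lemma isomorphic_sym: "isomorphic A B \<Longrightarrow> isomorphic B A"
  unfolding isomorphic_def using iso_inv by blast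

lemma isomorphic_card: "isomorphic A B \<Longrightarrow> card (verts A) = card (verts B)"
  unfolding isomorphic_def graph_iso_def using bij_betw_same_card by blast

definition induced :: "'a graph \<Rightarrow> 'a set \<Rightarrow> 'a graph" where
  "induced H W = (W, {e \<in> edges H. e \<subseteq> W})"

lemma verts_induced[simp]: "verts (induced H W) = W" by (simp add: induced_def verts_def)
lemma adj_induced: "adj (induced H W) u v \<longleftrightarrow> adj H u v \<and> u \<in> W \<and> v \<in> W"
  by (auto simp: induced_def adj_def edges_def)

lemma iso_induced: "graph_iso H H' f \<Longrightarrow> W \<subseteq> verts H \<Longrightarrow> graph_iso (induced H W) (induced H' (f ` W)) f"
  unfolding graph_iso_def adj_induced
  by (auto simp: bij_betw_def inj_on_subset inj_on_image_mem_iff)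

lemma transfer_graph:
  fixes H :: "'c graph" and V :: "'a set"
  assumes "graph H" "finite V" "card (verts H) \<le> card V"
  shows "\<exists>H' :: 'a graph. graph H' \<and> isomorphic H H'"
proof -
  have fin: "finite (verts H)" using assms unfolding graph_def by auto
  obtain g where g: "inj_on g (verts H)" "g ` verts H \<subseteq> V"
    using card_le_inj[OF fin assms(2) assms(3)] by blast
  define H' where "H' = (g ` verts H, (\<lambda>e. g ` e) ` edges H)"
  have vH': "verts H' = g ` verts H" by (simp add: H'_def verts_def)
  have eH': "edges H' = (\<lambda>e. g ` e) ` edges H" by (simp add: H'_def edges_def)
  have "graph H'"
    unfolding graph_def vH' eH'
  proof (intro conjI ballI)
    show "finite (g ` verts H)" using fin by simp
    fix e' assume "e' \<in> (\<lambda>e. g ` e) ` edges H"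
    then obtain e where e: "e \<in> edges H" "e' = g ` e" by blast
    then obtain u v where uv: "e = {u,v}" "u \<noteq> v" "u \<in> verts H" "v \<in> verts H"
      using assms(1) unfolding graph_def by blast
    have "g u \<noteq> g v" using uv g(1) by (meson inj_on_contraD)
    then show "\<exists>u v. e' = {u, v} \<and> u \<noteq> v \<and> u \<in> g ` verts H \<and> v \<in> g ` verts H"
      using e uv by auto
  qed
  moreover have "graph_iso H H' g"
    unfolding graph_iso_def
  proof (intro conjI ballI)
    show "bij_betw g (verts H) (verts H')" unfolding vH' using g(1) by (simp add: bij_betw_def)
    fix u v assume uv: "u \<in> verts H" "v \<in> verts H"
    show "adj H u v = adj H' (g u) (g v)"
    proof
      assume "adj H u v"
      then have "g ` {u,v} \<in> (\<lambda>e. g ` e) ` edges H" unfolding adj_def by blast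
      then show "adj H' (g u) (g v)" unfolding adj_def eH' by simp
    next
      assume "adj H' (g u) (g v)"
      then obtain e where e: "e \<in> edges H" "g ` e = {g u, g v}" unfolding adj_def eH' by auto
      then obtain a b where ab: "e = {a,b}" "a \<in> verts H" "b \<in> verts H"
        using assms(1) unfolding graph_def by blast
      have "{a,b} = {u,v}"
      proof -
        have "g ` {a,b} = g ` {u,v}" using e ab by simp
        moreover have "{a,b} \<subseteq> verts H" "{u,v} \<subseteq> verts H" using ab uv by auto
        ultimately show ?thesis using inj_on_image_eq_iff[OF g(1)] by blast
      qed
      then show "adj H u v" using e ab unfolding adj_def by simp
    qed
  qed
  ultimately show ?thesis unfolding isomorphic_def by blast
qed

definition gdist :: "'a graph \<Rightarrow> 'a \<Rightarrow> 'a \<Rightarrow> nat" where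
  "gdist H u v = (LEAST n. (adj H ^^ n) u v)"

lemma relpow_adj_sym: "(adj H ^^ n) u v \<Longrightarrow> (adj H ^^ n) v u"
proof (induction n arbitrary: v)
  case 0 then show ?case by simp
next
  case (Suc n)
  then obtain w where w: "(adj H ^^ n) u w" "adj H w v" by auto
  have 1: "(adj H ^^ n) w u" using Suc.IH[OF w(1)] .
  have 2: "adj H v w" using w(2) by (simp add: adj_sym)
  show ?case using relpowp_Suc_I2[OF 2 1] .
qed

lemma gdist_sym: "gdist H u v = gdist H v u"
proof -
  have "(\<lambda>n. (adj H ^^ n) u v) = (\<lambda>n. (adj H ^^ n) v u)" by (intro ext iffI) (simp_all add: relpow_adj_sym)
  then show ?thesis unfolding gdist_def by simp
qed

lemma gdist_walk: "(adj H ^^ n) u v \<Longrightarrow> (adj H ^^ gdist H u v) u v \<and> gdist H u v \<le> n"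
proof -
  assume a: "(adj H ^^ n) u v"
  show ?thesis unfolding gdist_def
    using LeastI[of "\<lambda>n. (adj H ^^ n) u v", OF a] Least_le[of "\<lambda>n. (adj H ^^ n) u v", OF a] by simp
qed

lemma gdist_le: assumes "(adj H ^^ n) u v" shows "gdist H u v \<le> n"
  using gdist_walk[OF assms] by simp

lemma gdist_walk': assumes "(adj H ^^ n) u v" shows "(adj H ^^ gdist H u v) u v"
  using gdist_walk[OF assms] by simp

lemma gdist_refl[simp]: "gdist H u u = 0"
  unfolding gdist_def by (rule Least_eq_0) simp

lemma gdist_zero: "(adj H ^^ n) u v \<Longrightarrow> gdist H u v = 0 \<Longrightarrow> u = v"
proof -
  assume a: "(adj H ^^ n) u v" "gdist H u v = 0"
  have "(adj H ^^ gdist H u v) u v" using gdist_walk[OF a(1)] by blast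
  then show ?thesis using a(2) by simp
qed

lemma gdist_tri:
  assumes "(adj H ^^ n) u v" "(adj H ^^ m) v w"
  shows "gdist H u w \<le> gdist H u v + gdist H v w"
proof -
  have "(adj H ^^ gdist H u v) u v" "(adj H ^^ gdist H v w) v w" using gdist_walk[OF assms(1)] gdist_walk[OF assms(2)] by blast+
  then have "(adj H ^^ (gdist H u v + gdist H v w)) u w" by (auto simp: relpowp_add)
  then show ?thesis by (rule gdist_le)
qed

lemma gdist_adj: "adj H u v \<Longrightarrow> gdist H u v \<le> 1"
proof -
  assume "adj H u v"
  then have "(adj H ^^ 1) u v" by (auto intro: relcomppI)
  from gdist_walk[OF this] show ?thesis by simp
qed

lemma connected_walk: "connected_graph H \<Longrightarrow> u \<in> verts H \<Longrightarrow> v \<in> verts H \<Longrightarrow> \<exists>n. (adj H ^^ n) u v"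
  unfolding connected_graph_def by (auto simp flip: rtranclp_power)

lemma iso_walk:
  assumes "graph H" "graph_iso H H' f" "u \<in> verts H"
  shows "(adj H ^^ n) u v \<Longrightarrow> (adj H' ^^ n) (f u) (f v)"
proof (induction n arbitrary: v)
  case 0 then show ?case by simp
next
  case (Suc n)
  then obtain w where w: "(adj H ^^ n) u w" "adj H w v" by auto
  have wv: "w \<in> verts H" "v \<in> verts H" using graph_adjD[OF assms(1) w(2)] by simp_all
  have "adj H' (f w) (f v)" using w(2) assms(2) wv unfolding graph_iso_def by simp
  moreover have "(adj H' ^^ n) (f u) (f w)" using Suc.IH[OF w(1)] .
  ultimately show ?case by (rule relpowp_Suc_I[rotated])
qed

lemma iso_gdist:
  assumes "graph H" "graph H'" "graph_iso H H' f" "u \<in> verts H" "v \<in> verts H"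
    and "(adj H ^^ n) u v"
  shows "gdist H' (f u) (f v) = gdist H u v"
proof -
  have w1: "(adj H ^^ gdist H u v) u v" by (rule gdist_walk'[OF assms(6)])
  have w2: "(adj H' ^^ gdist H u v) (f u) (f v)" using iso_walk[OF assms(1,3,4) w1] .
  then have le1: "gdist H' (f u) (f v) \<le> gdist H u v" by (rule gdist_le)
  define g where "g = inv_into (verts H) f"
  have gi: "graph_iso H' H g" unfolding g_def by (rule iso_inv[OF assms(3)])
  have inj: "inj_on f (verts H)" using assms(3) unfolding graph_iso_def bij_betw_def by blast
  have fu: "f u \<in> verts H'" using assms(3,4) unfolding graph_iso_def bij_betw_def by blast
  have "(adj H' ^^ gdist H' (f u) (f v)) (f u) (f v)" by (rule gdist_walk'[OF w2])
  then have "(adj H ^^ gdist H' (f u) (f v)) (g (f u)) (g (f v))" by (rule iso_walk[OF assms(2) gi fu])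
  moreover have "g (f u) = u" "g (f v) = v" unfolding g_def using inj assms(4,5) by simp_all
  ultimately have "(adj H ^^ gdist H' (f u) (f v)) u v" by simp
  then have "gdist H u v \<le> gdist H' (f u) (f v)" by (rule gdist_le)
  then show ?thesis using le1 by simp
qed

locale prodG =
  fixes Gs :: "nat \<Rightarrow> 'a graph" and I :: "nat set"
  assumes finI: "finite I"
    and grG: "\<And>i. i \<in> I \<Longrightarrow> graph (Gs i)"
    and conG: "\<And>i. i \<in> I \<Longrightarrow> connected_graph (Gs i)"
begin

abbreviation "P \<equiv> cart_prod_family Gs I"
abbreviation "PV \<equiv> PiE I (\<lambda>i. verts (Gs i))"

lemma verts_P: "verts P = PV"
  by (simp add: cart_prod_family_def verts_def)

lemma adj_P: "adj P x y \<longleftrightarrow> x \<in> PV \<and> y \<in> PV \<and>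
   (\<exists>i\<in>I. adj (Gs i) (x i) (y i) \<and> (\<forall>j\<in>I. j \<noteq> i \<longrightarrow> x j = y j))"
proof
  assume "adj P x y"
  then obtain x' y' where e: "{x,y} = {x',y'}" "x' \<in> PV" "y' \<in> PV"
    "\<exists>i\<in>I. {x' i, y' i} \<in> edges (Gs i) \<and> (\<forall>j\<in>I. j \<noteq> i \<longrightarrow> x' j = y' j)"
    unfolding adj_def cart_prod_family_def edges_def by auto
  from e(1) have "(x = x' \<and> y = y') \<or> (x = y' \<and> y = x')" by (auto simp: doubleton_eq_iff)
  then show "x \<in> PV \<and> y \<in> PV \<and> (\<exists>i\<in>I. adj (Gs i) (x i) (y i) \<and> (\<forall>j\<in>I. j \<noteq> i \<longrightarrow> x j = y j))"
    using e(2-4) unfolding adj_def by (auto simp: insert_commute)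
next
  assume "x \<in> PV \<and> y \<in> PV \<and> (\<exists>i\<in>I. adj (Gs i) (x i) (y i) \<and> (\<forall>j\<in>I. j \<noteq> i \<longrightarrow> x j = y j))"
  then show "adj P x y" unfolding adj_def cart_prod_family_def edges_def by auto
qed

lemma graph_P: "graph P"
  unfolding graph_def
proof (intro conjI ballI)
  show "finite (verts P)" unfolding verts_P using finI grG by (auto simp: graph_def intro!: finite_PiE)
  fix e assume "e \<in> edges P"
  then obtain x y where e: "e = {x,y}" "x \<in> PV" "y \<in> PV"
    "\<exists>i\<in>I. {x i, y i} \<in> edges (Gs i) \<and> (\<forall>j\<in>I. j \<noteq> i \<longrightarrow> x j = y j)"
    unfolding cart_prod_family_def edges_def by auto
  then obtain i where "i \<in> I" "adj (Gs i) (x i) (y i)" unfolding adj_def by auto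
  then have "x \<noteq> y" using graph_adjD grG by metis
  then show "\<exists>u v. e = {u, v} \<and> u \<noteq> v \<and> u \<in> verts P \<and> v \<in> verts P"
    using e verts_P by auto
qed

lemma PV_upd: "x \<in> PV \<Longrightarrow> i \<in> I \<Longrightarrow> b \<in> verts (Gs i) \<Longrightarrow> x(i := b) \<in> PV"
  by (auto simp: PiE_iff extensional_def)

lemma lift_walk:
  assumes "x \<in> PV" "i \<in> I"
  shows "(adj (Gs i) ^^ m) (x i) b \<Longrightarrow> (adj P ^^ m) x (x(i := b))"
proof (induction m arbitrary: b)
  case 0 then show ?case by (auto simp: fun_eq_iff)
next
  case (Suc m)
  then obtain c where c: "(adj (Gs i) ^^ m) (x i) c" "adj (Gs i) c b" by auto
  have cb: "c \<in> verts (Gs i)" "b \<in> verts (Gs i)" using graph_adjD[OF grG[OF assms(2)] c(2)] by simp_all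
  have "adj P (x(i := c)) (x(i := b))"
    unfolding adj_P using PV_upd[OF assms(1,2)] cb c(2) assms(2) by auto
  moreover have "(adj P ^^ m) x (x(i := c))" using Suc.IH[OF c(1)] .
  ultimately show ?case by (rule relpowp_Suc_I[rotated])
qed

lemma P_lower:
  assumes "x \<in> PV"
  shows "(adj P ^^ n) x y \<Longrightarrow> (\<Sum>j\<in>I. gdist (Gs j) (x j) (y j)) \<le> n"
proof (induction n arbitrary: y)
  case 0 then show ?case by simp
next
  case (Suc n)
  then obtain z where z: "(adj P ^^ n) x z" "adj P z y" by auto
  have IH: "(\<Sum>j\<in>I. gdist (Gs j) (x j) (z j)) \<le> n" using Suc.IH[OF z(1)] .
  from z(2) have zy: "z \<in> PV" "y \<in> PV" and
    "\<exists>i\<in>I. adj (Gs i) (z i) (y i) \<and> (\<forall>j\<in>I. j \<noteq> i \<longrightarrow> z j = y j)" unfolding adj_P by auto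
  then obtain i where i: "i \<in> I" "adj (Gs i) (z i) (y i)" "\<forall>j\<in>I. j \<noteq> i \<longrightarrow> z j = y j" by blast
  have tri: "gdist (Gs j) (x j) (y j) \<le> gdist (Gs j) (x j) (z j) + gdist (Gs j) (z j) (y j)" if jI: "j \<in> I" for j
  proof -
    have "x j \<in> verts (Gs j)" "z j \<in> verts (Gs j)" "y j \<in> verts (Gs j)"
      using assms zy jI by (auto simp: PiE_iff)
    then obtain n1 n2 where "(adj (Gs j) ^^ n1) (x j) (z j)" "(adj (Gs j) ^^ n2) (z j) (y j)"
      using connected_walk[OF conG[OF jI]] by meson
    then show ?thesis by (rule gdist_tri)
  qed
  have one: "gdist (Gs j) (z j) (y j) \<le> (if j = i then 1 else 0)" if "j \<in> I" for j
    using i that gdist_adj[OF i(2)] by auto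
  have "(\<Sum>j\<in>I. gdist (Gs j) (x j) (y j)) \<le> (\<Sum>j\<in>I. gdist (Gs j) (x j) (z j) + gdist (Gs j) (z j) (y j))"
    using tri by (rule sum_mono)
  also have "\<dots> = (\<Sum>j\<in>I. gdist (Gs j) (x j) (z j)) + (\<Sum>j\<in>I. gdist (Gs j) (z j) (y j))"
    by (rule sum.distrib)
  also have "(\<Sum>j\<in>I. gdist (Gs j) (z j) (y j)) \<le> (\<Sum>j\<in>I. (if j = i then 1 else 0))"
    using one by (rule sum_mono)
  also have "(\<Sum>j\<in>I. (if j = i then 1 else 0::nat)) = 1" using i(1) finI by simp
  finally show ?case using IH by simp
qed

lemma P_upper_aux:
  assumes "x \<in> PV" "y \<in> PV" "J \<subseteq> I"
  shows "(adj P ^^ (\<Sum>j\<in>J. gdist (Gs j) (x j) (y j))) x (\<lambda>j. if j \<in> J then y j else x j)"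
proof -
  have "finite J" using assms(3) finI finite_subset by blast
  then show ?thesis using assms(3)
  proof (induction J rule: finite_induct)
    case empty then show ?case by simp
  next
    case (insert j J)
    let ?z = "\<lambda>l. if l \<in> J then y l else x l"
    have zJ: "(adj P ^^ (\<Sum>j\<in>J. gdist (Gs j) (x j) (y j))) x ?z" using insert by simp
    have jI: "j \<in> I" using insert by simp
    have zPV: "?z \<in> PV" using assms(1,2) by (auto simp: PiE_iff extensional_def)
    have zj: "?z j = x j" using insert(2) by simp
    have "x j \<in> verts (Gs j)" "y j \<in> verts (Gs j)" using assms(1,2) jI by (auto simp: PiE_iff)
    then obtain m where "(adj (Gs j) ^^ m) (x j) (y j)" using connected_walk[OF conG[OF jI]] by meson
    then have "(adj (Gs j) ^^ gdist (Gs j) (x j) (y j)) (?z j) (y j)" using zj gdist_walk' by metis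
    then have "(adj P ^^ gdist (Gs j) (x j) (y j)) ?z (?z(j := y j))" by (rule lift_walk[OF zPV jI])
    moreover have "?z(j := y j) = (\<lambda>l. if l \<in> insert j J then y l else x l)" by auto
    ultimately have "(adj P ^^ gdist (Gs j) (x j) (y j)) ?z (\<lambda>l. if l \<in> insert j J then y l else x l)" by simp
    with zJ have "(adj P ^^ ((\<Sum>j\<in>J. gdist (Gs j) (x j) (y j)) + gdist (Gs j) (x j) (y j))) x
        (\<lambda>l. if l \<in> insert j J then y l else x l)" by (auto simp: relpowp_add)
    then show ?case using insert(1,2) by (simp add: add.commute)
  qed
qed

lemma P_dist:
  assumes "x \<in> PV" "y \<in> PV"
  shows "(adj P ^^ (\<Sum>j\<in>I. gdist (Gs j) (x j) (y j))) x y"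
    and "gdist P x y = (\<Sum>j\<in>I. gdist (Gs j) (x j) (y j))"
proof -
  have "(\<lambda>j. if j \<in> I then y j else x j) = y" using assms by (auto simp: PiE_iff extensional_def)
  then show w: "(adj P ^^ (\<Sum>j\<in>I. gdist (Gs j) (x j) (y j))) x y"
    using P_upper_aux[OF assms order_refl] by simp
  have "gdist P x y \<le> (\<Sum>j\<in>I. gdist (Gs j) (x j) (y j))" by (rule gdist_le[OF w])
  moreover have "(\<Sum>j\<in>I. gdist (Gs j) (x j) (y j)) \<le> gdist P x y"
    by (rule P_lower[OF assms(1) gdist_walk'[OF w]])
  ultimately show "gdist P x y = (\<Sum>j\<in>I. gdist (Gs j) (x j) (y j))" by simp
qed

end

lemma verts_cart_prod[simp]: "verts (cart_prod A B) = verts A \<times> verts B"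
  by (simp add: cart_prod_def verts_def)

lemma adj_cart_prod:
  "adj (cart_prod A B) (a,b) (a',b') \<longleftrightarrow>
     (a = a' \<and> a \<in> verts A \<and> adj B b b') \<or> (adj A a a' \<and> b = b' \<and> b \<in> verts B)"
proof
  assume "adj (cart_prod A B) (a,b) (a',b')"
  then obtain g h g' h' where e: "{(a,b),(a',b')} = {(g,h),(g',h')}"
    "(g = g' \<and> g \<in> verts A \<and> {h, h'} \<in> edges B) \<or> ({g, g'} \<in> edges A \<and> h = h' \<and> h \<in> verts B)"
    unfolding adj_def cart_prod_def edges_def by auto
  from e(1) have "((a,b) = (g,h) \<and> (a',b') = (g',h')) \<or> ((a,b) = (g',h') \<and> (a',b') = (g,h))"
    by (auto simp: doubleton_eq_iff)
  then show "(a = a' \<and> a \<in> verts A \<and> adj B b b') \<or> (adj A a a' \<and> b = b' \<and> b \<in> verts B)"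
    using e(2) unfolding adj_def by (auto simp: insert_commute)
next
  assume "(a = a' \<and> a \<in> verts A \<and> adj B b b') \<or> (adj A a a' \<and> b = b' \<and> b \<in> verts B)"
  then show "adj (cart_prod A B) (a,b) (a',b')"
    unfolding adj_def cart_prod_def edges_def by auto
qed

lemma graph_induced: "graph H \<Longrightarrow> W \<subseteq> verts H \<Longrightarrow> graph (induced H W)"
proof -
  assume g: "graph H" and W: "W \<subseteq> verts H"
  have "finite W" using g W unfolding graph_def using finite_subset by blast
  moreover have "\<exists>u v. e = {u, v} \<and> u \<noteq> v \<and> u \<in> W \<and> v \<in> W" if "e \<in> edges (induced H W)" for e
  proof -
    have e: "e \<in> edges H" "e \<subseteq> W" using that by (auto simp: induced_def edges_def)
    then obtain u v where "e = {u, v}" "u \<noteq> v" using g unfolding graph_def by blast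
    then show ?thesis using e by auto
  qed
  ultimately show ?thesis unfolding graph_def by simp
qed

lemma iso_cart_prod_right:
  assumes "graph_iso B B' g"
  shows "graph_iso (cart_prod A B) (cart_prod A B') (\<lambda>(a,b). (a, g b))"
  unfolding graph_iso_def
proof (intro conjI ballI)
  have "bij_betw g (verts B) (verts B')" using assms unfolding graph_iso_def by blast
  then show "bij_betw (\<lambda>(a, b). (a, g b)) (verts (cart_prod A B)) (verts (cart_prod A B'))"
    unfolding verts_cart_prod bij_betw_def inj_on_def by (auto simp: image_iff) (metis image_iff)
  fix u v assume uv: "u \<in> verts (cart_prod A B)" "v \<in> verts (cart_prod A B)"
  obtain a b a' b' where u: "u = (a,b)" and v: "v = (a',b')" by fastforce
  have bb: "b \<in> verts B" "b' \<in> verts B" using uv u v by auto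
  have inj: "inj_on g (verts B)" and ad: "adj B b b' = adj B' (g b) (g b')"
     and gb: "g b \<in> verts B'"
    using assms bb unfolding graph_iso_def bij_betw_def by auto
  have "(g b = g b') = (b = b')" using inj bb by (meson inj_on_eq_iff)
  then show "adj (cart_prod A B) u v = adj (cart_prod A B') ((\<lambda>(a, b). (a, g b)) u) ((\<lambda>(a, b). (a, g b)) v)"
    unfolding u v using ad bb gb by (simp add: adj_cart_prod)
qed

lemma sum_eq_termwise:
  fixes f g :: "'i \<Rightarrow> nat"
  assumes "finite A" "\<And>x. x \<in> A \<Longrightarrow> f x \<le> g x" "sum f A = sum g A" "a \<in> A"
  shows "f a = g a"
proof (rule ccontr)
  assume "f a \<noteq> g a"
  then have "f a < g a" using assms(2,4) by force
  then have "sum f A < sum g A" using sum_strict_mono_ex1[OF assms(1)] assms(2,4) by blast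
  then show False using assms(3) by simp
qed

context prodG begin

definition layer :: "(nat \<Rightarrow> 'a) \<Rightarrow> nat \<Rightarrow> (nat \<Rightarrow> 'a) set" where
  "layer x i = (\<lambda>a. x(i := a)) ` verts (Gs i)"

lemma layer_sub: "x \<in> PV \<Longrightarrow> i \<in> I \<Longrightarrow> layer x i \<subseteq> PV"
  unfolding layer_def using PV_upd by blast

lemma layer_iso:
  assumes "x \<in> PV" "i \<in> I"
  shows "graph_iso (Gs i) (induced P (layer x i)) (\<lambda>a. x(i := a))"
  unfolding graph_iso_def
proof (intro conjI ballI)
  show "bij_betw (\<lambda>a. x(i := a)) (verts (Gs i)) (verts (induced P (layer x i)))"
    unfolding verts_induced layer_def bij_betw_def inj_on_def by (auto dest: fun_cong[where x=i])
  fix a b assume ab: "a \<in> verts (Gs i)" "b \<in> verts (Gs i)"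
  have inl: "x(i:=a) \<in> layer x i" "x(i:=b) \<in> layer x i" using ab unfolding layer_def by auto
  have pv: "x(i:=a) \<in> PV" "x(i:=b) \<in> PV" using PV_upd assms ab by auto
  show "adj (Gs i) a b = adj (induced P (layer x i)) (x(i := a)) (x(i := b))"
  proof
    assume "adj (Gs i) a b"
    then show "adj (induced P (layer x i)) (x(i := a)) (x(i := b))"
      unfolding adj_induced adj_P using inl pv assms(2) by auto
  next
    assume "adj (induced P (layer x i)) (x(i := a)) (x(i := b))"
    then obtain m where m: "m \<in> I" "adj (Gs m) ((x(i:=a)) m) ((x(i:=b)) m)"
      "\<forall>j\<in>I. j \<noteq> m \<longrightarrow> (x(i:=a)) j = (x(i:=b)) j"
      unfolding adj_induced adj_P by blast
    show "adj (Gs i) a b"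
    proof (cases "m = i")
      case True then show ?thesis using m by simp
    next
      case False
      then have "(x(i:=a)) m = (x(i:=b)) m" by simp
      then show ?thesis using False m(2) graph_adjD[OF grG[OF m(1)], of "x m" "x m"] by simp
    qed
  qed
qed

lemma card_layer: "x \<in> PV \<Longrightarrow> i \<in> I \<Longrightarrow> card (layer x i) = card (verts (Gs i))"
proof -
  assume "x \<in> PV" "i \<in> I"
  from layer_iso[OF this] have "bij_betw (\<lambda>a. x(i := a)) (verts (Gs i)) (layer x i)"
    unfolding graph_iso_def verts_induced by blast
  then show ?thesis by (simp add: bij_betw_same_card)
qed

lemma aut_inv: "automorphism P f \<Longrightarrow> automorphism P (inv_into PV f)"
  unfolding automorphism_def using iso_inv[of P P f] verts_P by simp

lemma aut_bij: "automorphism P f \<Longrightarrow> bij_betw f PV PV"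
  unfolding automorphism_def graph_iso_def verts_P by blast

lemma aut_gdist:
  assumes "automorphism P f" "x \<in> PV" "y \<in> PV"
  shows "gdist P (f x) (f y) = gdist P x y"
  using iso_gdist[OF graph_P graph_P assms(1)[unfolded automorphism_def], unfolded verts_P, OF assms(2,3) P_dist(1)[OF assms(2,3)]] .

lemma mix_PV: "u \<in> PV \<Longrightarrow> v \<in> PV \<Longrightarrow> (\<lambda>j. if j \<in> J then u j else v j) \<in> PV"
  by (auto simp: PiE_iff extensional_def)

lemma dist_mix:
  fixes J :: "nat set"
  assumes "u \<in> PV" "v \<in> PV"
  defines "w \<equiv> (\<lambda>j. if j \<in> J then u j else v j)"
  shows "gdist P u w + gdist P w v = gdist P u v"
proof -
  have w: "w \<in> PV" unfolding w_def using mix_PV assms by blast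
  have "gdist P u w + gdist P w v = (\<Sum>j\<in>I. gdist (Gs j) (u j) (w j) + gdist (Gs j) (w j) (v j))"
    using P_dist(2)[OF assms(1) w] P_dist(2)[OF w assms(2)] by (simp add: sum.distrib)
  also have "\<dots> = (\<Sum>j\<in>I. gdist (Gs j) (u j) (v j))"
    by (rule sum.cong) (auto simp: w_def)
  finally show ?thesis using P_dist(2)[OF assms(1,2)] by simp
qed

lemma layer_between:
  assumes "x \<in> PV" "i \<in> I" "a \<in> verts (Gs i)" "b \<in> verts (Gs i)" "w \<in> PV"
    and eq: "gdist P (x(i:=a)) w + gdist P w (x(i:=b)) = gdist P (x(i:=a)) (x(i:=b))"
  shows "w \<in> layer x i"
proof -
  let ?u = "x(i:=a)" and ?v = "x(i:=b)"
  have pv: "?u \<in> PV" "?v \<in> PV" using PV_upd assms by auto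
  have s: "(\<Sum>j\<in>I. gdist (Gs j) (?u j) (w j) + gdist (Gs j) (w j) (?v j)) = (\<Sum>j\<in>I. gdist (Gs j) (?u j) (?v j))"
    using eq P_dist(2)[OF pv(1) assms(5)] P_dist(2)[OF assms(5) pv(2)] P_dist(2)[OF pv]
    by (simp add: sum.distrib)
  have tri: "gdist (Gs j) (?u j) (?v j) \<le> gdist (Gs j) (?u j) (w j) + gdist (Gs j) (w j) (?v j)" if jI: "j \<in> I" for j
  proof -
    have "?u j \<in> verts (Gs j)" "w j \<in> verts (Gs j)" "?v j \<in> verts (Gs j)"
      using pv assms(5) jI by (auto simp: PiE_iff)
    then obtain n1 n2 where "(adj (Gs j) ^^ n1) (?u j) (w j)" "(adj (Gs j) ^^ n2) (w j) (?v j)"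
      using connected_walk[OF conG[OF jI]] by meson
    then show ?thesis by (rule gdist_tri)
  qed
  have wl: "w l = x l" if lI: "l \<in> I" "l \<noteq> i" for l
  proof -
    have "gdist (Gs l) (?u l) (?v l) = gdist (Gs l) (?u l) (w l) + gdist (Gs l) (w l) (?v l)"
      using sum_eq_termwise[OF finI tri s[symmetric] lI(1)] .
    then have "gdist (Gs l) (x l) (w l) = 0" using lI by simp
    moreover have "x l \<in> verts (Gs l)" "w l \<in> verts (Gs l)" using assms(1,5) lI by (auto simp: PiE_iff)
    then obtain n where "(adj (Gs l) ^^ n) (x l) (w l)" using connected_walk[OF conG[OF lI(1)]] by meson
    ultimately show ?thesis using gdist_zero[where H="Gs l" and n=n and u="x l" and v="w l"] by simp
  qed
  have "w = x(i := w i)"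
  proof
    fix l show "w l = (x(i := w i)) l"
    proof (cases "l \<in> I")
      case True then show ?thesis using wl by (cases "l = i") auto
    next
      case False then show ?thesis using assms(1,5) assms(2) by (auto simp: PiE_iff extensional_def)
    qed
  qed
  moreover have "w i \<in> verts (Gs i)" using assms(5,2) by (auto simp: PiE_iff)
  ultimately show ?thesis unfolding layer_def by blast
qed

lemma image_layer_mix:
  assumes f: "automorphism P f" and x: "x \<in> PV" and i: "i \<in> I"
    and u: "u \<in> f ` layer x i" and v: "v \<in> f ` layer x i"
  shows "(\<lambda>j. if j \<in> J then u j else v j) \<in> f ` layer x i"
proof -
  define w where "w = (\<lambda>j. if j \<in> J then u j else v j)"
  obtain a b where ab: "a \<in> verts (Gs i)" "b \<in> verts (Gs i)" "u = f (x(i:=a))" "v = f (x(i:=b))"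
    using u v unfolding layer_def by blast
  have pv: "x(i:=a) \<in> PV" "x(i:=b) \<in> PV" using PV_upd x i ab by auto
  have bij: "bij_betw f PV PV" using aut_bij[OF f] .
  have uv: "u \<in> PV" "v \<in> PV" using ab(3,4) pv bij_betw_apply[OF bij] by simp_all
  have w: "w \<in> PV" unfolding w_def using mix_PV uv by blast
  define w' where "w' = inv_into PV f w"
  have w': "w' \<in> PV" "f w' = w" unfolding w'_def using bij w
    by (auto simp: bij_betw_def inv_into_into f_inv_into_f)
  have "gdist P u w + gdist P w v = gdist P u v" unfolding w_def by (rule dist_mix[OF uv])
  then have "gdist P (x(i:=a)) w' + gdist P w' (x(i:=b)) = gdist P (x(i:=a)) (x(i:=b))"
    using aut_gdist[OF f pv(1) w'(1)] aut_gdist[OF f w'(1) pv(2)] aut_gdist[OF f pv(1) pv(2)] w'(2) ab(3,4) by simp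
  then have "w' \<in> layer x i" using layer_between[OF x i ab(1,2) w'(1)] by blast
  then show ?thesis using w'(2) unfolding w_def by (metis image_eqI)
qed

end

lemma (in prodG) sub: "J \<subseteq> I \<Longrightarrow> prodG Gs J"
  by unfold_locales (auto intro: finite_subset[OF _ finI] grG conG)

locale prodP = prodG +
  assumes primeG: "\<And>i. i \<in> I \<Longrightarrow> prime_graph (Gs i)"
    and noniso: "\<And>i j. i \<in> I \<Longrightarrow> j \<in> I \<Longrightarrow> i \<noteq> j \<Longrightarrow> \<not> isomorphic (Gs i) (Gs j)"
begin

lemma finPV: "finite PV"
  using graph_P verts_P unfolding graph_def by simp

lemma finV: "i \<in> I \<Longrightarrow> finite (verts (Gs i))"
  using grG unfolding graph_def by blast

lemma split_iso:
  assumes S: "S \<subseteq> PV" and j: "j \<in> I"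
    and mix: "\<And>u v. u \<in> S \<Longrightarrow> v \<in> S \<Longrightarrow> (\<lambda>l. if l \<in> {j} then u l else v l) \<in> S"
  shows "graph_iso (induced P S)
     (cart_prod (induced (Gs j) ((\<lambda>w. w j) ` S))
                (induced (cart_prod_family Gs (I - {j})) ((\<lambda>w. w(j := undefined)) ` S)))
     (\<lambda>w. (w j, w(j := undefined)))"
  unfolding graph_iso_def
proof (intro conjI ballI)
  interpret Q: prodG Gs "I - {j}" by (rule sub) auto
  let ?h = "\<lambda>w. (w j, w(j := undefined))"
  show "bij_betw ?h (verts (induced P S)) (verts (cart_prod (induced (Gs j) ((\<lambda>w. w j) ` S))
                (induced (cart_prod_family Gs (I - {j})) ((\<lambda>w. w(j := undefined)) ` S))))"
    unfolding verts_induced verts_cart_prod bij_betw_def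
  proof
    show "inj_on ?h S"
    proof (rule inj_onI)
      fix w w' assume "?h w = ?h w'"
      then have a: "w j = w' j" "w(j := undefined) = w'(j := undefined)" by auto
      show "w = w'"
      proof
        fix l show "w l = w' l"
        proof (cases "l = j")
          case True then show ?thesis using a by simp
        next
          case False then show ?thesis using fun_cong[OF a(2), of l] by simp
        qed
      qed
    qed
    show "?h ` S = (\<lambda>w. w j) ` S \<times> (\<lambda>w. w(j := undefined)) ` S"
    proof
      show "?h ` S \<subseteq> (\<lambda>w. w j) ` S \<times> (\<lambda>w. w(j := undefined)) ` S" by auto
      show "(\<lambda>w. w j) ` S \<times> (\<lambda>w. w(j := undefined)) ` S \<subseteq> ?h ` S"
      proof
        fix p assume "p \<in> (\<lambda>w. w j) ` S \<times> (\<lambda>w. w(j := undefined)) ` S"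
        then obtain u v where uv: "u \<in> S" "v \<in> S" "p = (u j, v(j := undefined))" by auto
        let ?w = "\<lambda>l. if l \<in> {j} then u l else v l"
        have "?w \<in> S" using mix uv by blast
        moreover have "?w j = u j" by simp
        moreover have "?w(j := undefined) = v(j := undefined)" by (rule ext) simp
        ultimately have "?w \<in> S \<and> ?h ?w = p" using uv(3) by simp
        then show "p \<in> ?h ` S" by (intro image_eqI[where x="?w"]) auto
      qed
    qed
  qed
  fix w w' assume ww: "w \<in> verts (induced P S)" "w' \<in> verts (induced P S)"
  then have wS: "w \<in> S" "w' \<in> S" by auto
  then have wPV: "w \<in> PV" "w' \<in> PV" using S by auto
  have rPV: "w(j := undefined) \<in> Q.PV" "w'(j := undefined) \<in> Q.PV"
    using wPV by (auto simp: PiE_iff extensional_def)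
  have und: "w l = undefined" "w' l = undefined" if "l \<notin> I" for l
    using wPV that by (auto simp: PiE_iff extensional_def)
  have jv: "w j \<in> verts (Gs j)" "w' j \<in> verts (Gs j)" using wPV j by (auto simp: PiE_iff)
  have L: "adj (induced P S) w w' \<longleftrightarrow>
     (\<exists>m\<in>I. adj (Gs m) (w m) (w' m) \<and> (\<forall>l\<in>I. l \<noteq> m \<longrightarrow> w l = w' l))"
    unfolding adj_induced adj_P using wS wPV by auto
  have R: "adj (cart_prod (induced (Gs j) ((\<lambda>w. w j) ` S))
                (induced (cart_prod_family Gs (I - {j})) ((\<lambda>w. w(j := undefined)) ` S))) (?h w) (?h w')
     \<longleftrightarrow> (w j = w' j \<and> (\<exists>m\<in>I - {j}. adj (Gs m) (w m) (w' m) \<and> (\<forall>l\<in>I - {j}. l \<noteq> m \<longrightarrow> w l = w' l)))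
       \<or> (adj (Gs j) (w j) (w' j) \<and> (\<forall>l. l \<noteq> j \<longrightarrow> w l = w' l))"
  proof -
    have e1: "(w(j := undefined) = w'(j := undefined)) = (\<forall>l. l \<noteq> j \<longrightarrow> w l = w' l)"
      by (auto simp: fun_eq_iff)
    have e2: "adj (cart_prod_family Gs (I - {j})) (w(j := undefined)) (w'(j := undefined)) \<longleftrightarrow>
        (\<exists>m\<in>I - {j}. adj (Gs m) (w m) (w' m) \<and> (\<forall>l\<in>I - {j}. l \<noteq> m \<longrightarrow> w l = w' l))"
      unfolding Q.adj_P using rPV by (auto split: if_splits)
    show ?thesis
      unfolding adj_cart_prod adj_induced e1 e2 using wS by auto
  qed
  show "adj (induced P S) w w' = adj (cart_prod (induced (Gs j) ((\<lambda>w. w j) ` S))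
                (induced (cart_prod_family Gs (I - {j})) ((\<lambda>w. w(j := undefined)) ` S))) (?h w) (?h w')"
    unfolding L R
  proof
    assume "\<exists>m\<in>I. adj (Gs m) (w m) (w' m) \<and> (\<forall>l\<in>I. l \<noteq> m \<longrightarrow> w l = w' l)"
    then obtain m where m: "m \<in> I" "adj (Gs m) (w m) (w' m)" "\<forall>l\<in>I. l \<noteq> m \<longrightarrow> w l = w' l" by blast
    show "(w j = w' j \<and> (\<exists>m\<in>I - {j}. adj (Gs m) (w m) (w' m) \<and> (\<forall>l\<in>I - {j}. l \<noteq> m \<longrightarrow> w l = w' l)))
       \<or> (adj (Gs j) (w j) (w' j) \<and> (\<forall>l. l \<noteq> j \<longrightarrow> w l = w' l))"
    proof (cases "m = j")
      case True
      then have "\<forall>l. l \<noteq> j \<longrightarrow> w l = w' l" using m und by metis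
      then show ?thesis using m True by blast
    next
      case False
      then have "w j = w' j" using m(3) j by auto
      then show ?thesis using m False by blast
    qed
  next
    assume "(w j = w' j \<and> (\<exists>m\<in>I - {j}. adj (Gs m) (w m) (w' m) \<and> (\<forall>l\<in>I - {j}. l \<noteq> m \<longrightarrow> w l = w' l)))
       \<or> (adj (Gs j) (w j) (w' j) \<and> (\<forall>l. l \<noteq> j \<longrightarrow> w l = w' l))"
    then show "\<exists>m\<in>I. adj (Gs m) (w m) (w' m) \<and> (\<forall>l\<in>I. l \<noteq> m \<longrightarrow> w l = w' l)"
    proof
      assume a: "w j = w' j \<and> (\<exists>m\<in>I - {j}. adj (Gs m) (w m) (w' m) \<and> (\<forall>l\<in>I - {j}. l \<noteq> m \<longrightarrow> w l = w' l))"
      then obtain m where "m \<in> I - {j}" "adj (Gs m) (w m) (w' m)" "\<forall>l\<in>I - {j}. l \<noteq> m \<longrightarrow> w l = w' l" by blast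
      then show ?thesis using a by (metis DiffD1 DiffI singletonD)
    next
      assume "adj (Gs j) (w j) (w' j) \<and> (\<forall>l. l \<noteq> j \<longrightarrow> w l = w' l)"
      then show ?thesis using j by blast
    qed
  qed
qed

end

lemma card_ge2: "finite A \<Longrightarrow> a \<in> A \<Longrightarrow> b \<in> A \<Longrightarrow> a \<noteq> b \<Longrightarrow> 2 \<le> card A"
proof -
  assume "finite A" "a \<in> A" "b \<in> A" "a \<noteq> b"
  then have "card {a,b} \<le> card A" by (intro card_mono) auto
  then show ?thesis using \<open>a \<noteq> b\<close> by simp
qed

context prodP begin

lemma no_two_coords:
  assumes S: "S \<subseteq> PV" and i: "i \<in> I" and j: "j \<in> I" and l: "l \<in> I" "l \<noteq> j"
    and mix: "\<And>u v. u \<in> S \<Longrightarrow> v \<in> S \<Longrightarrow> (\<lambda>l. if l \<in> {j} then u l else v l) \<in> S"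
    and iso: "isomorphic (Gs i) (induced P S)"
    and uv: "u \<in> S" "v \<in> S" "u j \<noteq> v j"
    and uv': "u' \<in> S" "v' \<in> S" "u' l \<noteq> v' l"
  shows False
proof -
  interpret Q: prodG Gs "I - {j}" by (rule sub) auto
  define pj where "pj = (\<lambda>w. w j) ` S"
  define rj where "rj = (\<lambda>w. w(j := undefined)) ` S"
  define A where "A = induced (Gs j) pj"
  define B0 where "B0 = induced (cart_prod_family Gs (I - {j})) rj"
  have gi: "graph_iso (induced P S) (cart_prod A B0) (\<lambda>w. (w j, w(j := undefined)))"
    unfolding A_def B0_def pj_def rj_def by (rule split_iso[OF S j mix])
  have finS: "finite S" using S finPV finite_subset by blast
  have cS: "card S = card pj * card rj"
  proof -
    have "bij_betw (\<lambda>w. (w j, w(j := undefined))) S (pj \<times> rj)"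
      using gi unfolding graph_iso_def A_def B0_def by simp
    then have "card S = card (pj \<times> rj)" by (rule bij_betw_same_card)
    then show ?thesis by (simp add: card_cartesian_product)
  qed
  have cSi: "card S = card (verts (Gs i))" using isomorphic_card[OF iso] by simp
  have pjS: "pj \<subseteq> verts (Gs j)" unfolding pj_def using j by (auto simp: PiE_iff dest!: subsetD[OF S])
  have rjS: "rj \<subseteq> Q.PV" unfolding rj_def by (auto simp: PiE_iff extensional_def split: if_splits dest!: subsetD[OF S])
  have fpj: "finite pj" "finite rj" unfolding pj_def rj_def using finS by auto
  have "u j \<in> pj" "v j \<in> pj" unfolding pj_def using uv by auto
  then have c1: "card pj \<ge> 2" using card_ge2[OF fpj(1) _ _ uv(3)] by simp
  have "u'(j := undefined) \<noteq> v'(j := undefined)"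
  proof
    assume "u'(j := undefined) = v'(j := undefined)"
    from fun_cong[OF this, of l] show False using uv'(3) l(2) by simp
  qed
  moreover have "u'(j := undefined) \<in> rj" "v'(j := undefined) \<in> rj" unfolding rj_def using uv' by auto
  ultimately have c2: "card rj \<ge> 2" using card_ge2[OF fpj(2)] by simp
  have "card pj * 2 \<le> card pj * card rj" using c2 by (rule mult_le_mono2)
  then have lt1: "card pj < card S" using cS c1 by linarith
  have "2 * card rj \<le> card pj * card rj" using c1 by (rule mult_le_mono1)
  then have lt2: "card rj < card S" using cS c2 by linarith
  have gA: "graph A" unfolding A_def by (rule graph_induced[OF grG[OF j] pjS])
  have gB0: "graph B0" unfolding B0_def by (rule graph_induced[OF Q.graph_P], unfold Q.verts_P, rule rjS)
  obtain B1 :: "'a graph" where B1: "graph B1" "isomorphic B0 B1"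
    using transfer_graph[OF gB0 finV[OF i]] lt2 cSi unfolding B0_def by auto
  have i1: "isomorphic (cart_prod A B0) (cart_prod A B1)"
    using B1(2) iso_cart_prod_right unfolding isomorphic_def by blast
  have i2: "isomorphic (induced P S) (cart_prod A B0)" using gi unfolding isomorphic_def by blast
  have iso2: "isomorphic (Gs i) (cart_prod A B1)"
    by (rule isomorphic_trans[OF isomorphic_trans[OF iso i2] i1])
  have n1: "\<not> isomorphic A (Gs i)" using isomorphic_card[of A "Gs i"] lt1 cSi unfolding A_def by force
  have n2: "\<not> isomorphic B1 (Gs i)" using isomorphic_card[of B1 "Gs i"] isomorphic_card[OF B1(2)] lt2 cSi
    unfolding B0_def by force
  show False using primeG[OF i] gA B1(1) iso2 n1 n2 unfolding prime_graph_def by blast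
qed

end

context prodP begin

lemma x_in_layer: "x \<in> PV \<Longrightarrow> i \<in> I \<Longrightarrow> x \<in> layer x i"
  unfolding layer_def by (rule image_eqI[where x="x i"]) (auto simp: PiE_iff)

lemma PV_eqI: "x \<in> PV \<Longrightarrow> y \<in> PV \<Longrightarrow> (\<And>l. l \<in> I \<Longrightarrow> x l = y l) \<Longrightarrow> x = y"
proof -
  assume a: "x \<in> PV" "y \<in> PV" "\<And>l. l \<in> I \<Longrightarrow> x l = y l"
  show "x = y"
  proof
    fix l show "x l = y l"
      using a by (cases "l \<in> I") (auto simp: PiE_iff extensional_def)
  qed
qed

lemma into_layer:
  assumes f: "automorphism P f" and x: "x \<in> PV" and i: "i \<in> I" and c: "card (verts (Gs i)) \<ge> 2"
  shows "\<exists>j\<in>I. f ` layer x i \<subseteq> layer (f x) j"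
proof -
  define S where "S = f ` layer x i"
  have bij: "bij_betw f PV PV" using aut_bij[OF f] .
  have lsub: "layer x i \<subseteq> PV" using layer_sub[OF x i] .
  have SPV: "S \<subseteq> PV" unfolding S_def using image_mono[OF lsub, of f] bij_betw_imp_surj_on[OF bij] by simp
  have mix: "\<And>u v. u \<in> S \<Longrightarrow> v \<in> S \<Longrightarrow> (\<lambda>l. if l \<in> {j'} then u l else v l) \<in> S" for j'
    unfolding S_def by (rule image_layer_mix[OF f x i])
  have g1: "graph_iso (Gs i) (induced P (layer x i)) (\<lambda>a. x(i := a))" by (rule layer_iso[OF x i])
  have g2: "graph_iso (induced P (layer x i)) (induced P S) f"
    unfolding S_def using iso_induced[of P P f "layer x i"] f lsub verts_P unfolding automorphism_def by simp
  have iso: "isomorphic (Gs i) (induced P S)" using iso_comp[OF g1 g2] unfolding isomorphic_def by blast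
  have inj: "inj_on f (layer x i)" using inj_on_subset[OF bij_betw_imp_inj_on[OF bij] lsub] .
  have cS: "card S = card (verts (Gs i))" unfolding S_def using card_image[OF inj] card_layer[OF x i] by simp
  have finS: "finite S" using SPV finPV finite_subset by blast
  have fxS: "f x \<in> S" unfolding S_def using x_in_layer[OF x i] by blast
  obtain u v where uv: "u \<in> S" "v \<in> S" "u \<noteq> v"
  proof -
    have "S \<noteq> {}" using fxS by blast
    have "card (S - {f x}) \<ge> 1" using cS c fxS finS by simp
    then have "S - {f x} \<noteq> {}" by (metis card.empty not_one_le_zero)
    then obtain v where "v \<in> S - {f x}" by blast
    then show ?thesis using that fxS by blast
  qed
  obtain j where j: "j \<in> I" "u j \<noteq> v j"
    using uv SPV PV_eqI by blast
  have wl: "w l = f x l" if w: "w \<in> S" and l: "l \<in> I" "l \<noteq> j" for w l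
  proof (rule ccontr)
    assume "w l \<noteq> f x l"
    then show False using no_two_coords[OF SPV i j(1) l mix iso uv(1,2) j(2) w fxS] by blast
  qed
  have fxPV: "f x \<in> PV" using fxS SPV by blast
  show ?thesis
  proof (intro bexI[OF _ j(1)] subsetI)
    fix w assume w: "w \<in> f ` layer x i"
    then have wS: "w \<in> S" "w \<in> PV" using SPV unfolding S_def by auto
    have "w = (f x)(j := w j)"
      by (rule PV_eqI[OF wS(2) PV_upd[OF fxPV j(1)]]) (use wS(2) j(1) in \<open>auto simp: PiE_iff intro: wl[OF wS(1)]\<close>)
    moreover have "w j \<in> verts (Gs j)" using wS(2) j(1) by (auto simp: PiE_iff)
    ultimately show "w \<in> layer (f x) j" unfolding layer_def by blast
  qed
qed

lemma aut_inv_apply: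
  assumes f: "automorphism P f" and y: "y \<in> PV"
  shows "f (inv_into PV f y) = y" "inv_into PV f y \<in> PV" "inv_into PV f (f y) = y"
  using aut_bij[OF f] y by (auto simp: bij_betw_def f_inv_into_f inv_into_into)

lemma layer_image:
  assumes f: "automorphism P f" and x: "x \<in> PV" and i: "i \<in> I" and c: "card (verts (Gs i)) \<ge> 2"
  shows "f ` layer x i = layer (f x) i"
proof -
  obtain j where j: "j \<in> I" and sub1: "f ` layer x i \<subseteq> layer (f x) j"
    using into_layer[OF f x i c] by blast
  define g where "g = inv_into PV f"
  have g: "automorphism P g" unfolding g_def by (rule aut_inv[OF f])
  have bij: "bij_betw f PV PV" using aut_bij[OF f] .
  have fx: "f x \<in> PV" using bij_betw_apply[OF bij x] .
  have gfx: "g (f x) = x" unfolding g_def using aut_inv_apply(3)[OF f x] .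
  have lsub: "layer x i \<subseteq> PV" using layer_sub[OF x i] .
  have inj: "inj_on f (layer x i)" using inj_on_subset[OF bij_betw_imp_inj_on[OF bij] lsub] .
  have finl: "finite (layer (f x) j)" using layer_sub[OF fx j] finPV finite_subset by blast
  have "card (verts (Gs i)) = card (f ` layer x i)" using card_image[OF inj] card_layer[OF x i] by simp
  also have "\<dots> \<le> card (layer (f x) j)" using card_mono[OF finl sub1] .
  also have "\<dots> = card (verts (Gs j))" using card_layer[OF fx j] .
  finally have cj: "card (verts (Gs j)) \<ge> 2" using c by simp
  obtain j' where j': "j' \<in> I" and sub2: "g ` layer (f x) j \<subseteq> layer x j'"
    using into_layer[OF g fx j cj] gfx by auto
  have sub3: "layer x i \<subseteq> layer x j'"
  proof
    fix y assume y: "y \<in> layer x i"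
    then have "f y \<in> layer (f x) j" using sub1 by blast
    then have "g (f y) \<in> layer x j'" using sub2 by blast
    then show "y \<in> layer x j'" using y lsub aut_inv_apply(3)[OF f] unfolding g_def by auto
  qed
  have "j' = i"
  proof (rule ccontr)
    assume ne: "j' \<noteq> i"
    have "card (verts (Gs i)) > 1" using c by simp
    have "\<not> (\<forall>a\<in>verts (Gs i). \<forall>b\<in>verts (Gs i). a = b)"
      using card_le_Suc0_iff_eq[OF finV[OF i]] c by auto
    then obtain a where a: "a \<in> verts (Gs i)" "a \<noteq> x i"
      using x i by (auto simp: PiE_iff)
    then have "x(i := a) \<in> layer x j'" using sub3 unfolding layer_def by blast
    then obtain b where "x(i := a) = x(j' := b)" unfolding layer_def by blast
    from fun_cong[OF this, of i] show False using ne a(2) by simp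
  qed
  have sub4: "layer (f x) j \<subseteq> f ` layer x i"
  proof
    fix y assume y: "y \<in> layer (f x) j"
    have yPV: "y \<in> PV" using y layer_sub[OF fx j] by blast
    have "g y \<in> layer x i" using sub2 y \<open>j' = i\<close> by blast
    moreover have "f (g y) = y" unfolding g_def using aut_inv_apply(1)[OF f yPV] .
    ultimately show "y \<in> f ` layer x i" by (intro image_eqI[where x="g y"]) auto
  qed
  have eq: "f ` layer x i = layer (f x) j" using sub1 sub4 by blast
  have g1: "graph_iso (Gs i) (induced P (layer x i)) (\<lambda>a. x(i := a))" by (rule layer_iso[OF x i])
  have g2: "graph_iso (induced P (layer x i)) (induced P (f ` layer x i)) f"
    using iso_induced[of P P f "layer x i"] f lsub verts_P unfolding automorphism_def by simp
  have i1: "isomorphic (Gs i) (induced P (layer (f x) j))"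
    using iso_comp[OF g1 g2] eq unfolding isomorphic_def by auto
  have i2: "isomorphic (Gs j) (induced P (layer (f x) j))"
    using layer_iso[OF fx j] unfolding isomorphic_def by blast
  have "isomorphic (Gs i) (Gs j)" by (rule isomorphic_trans[OF i1 isomorphic_sym[OF i2]])
  then have "i = j" using noniso[OF i j] by blast
  then show ?thesis using eq by simp
qed

lemma coord_stable:
  assumes f: "automorphism P f" and x: "x \<in> PV" and i: "i \<in> I" and a: "a \<in> verts (Gs i)" and l: "l \<noteq> i"
  shows "f (x(i := a)) l = f x l"
proof (cases "card (verts (Gs i)) \<ge> 2")
  case True
  have "x(i := a) \<in> layer x i" unfolding layer_def using a by blast
  then have "f (x(i := a)) \<in> layer (f x) i" using layer_image[OF f x i True] by blast
  then obtain b where "f (x(i := a)) = (f x)(i := b)" unfolding layer_def by blast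
  then show ?thesis using l by simp
next
  case False
  then have "card (verts (Gs i)) \<le> 1" by simp
  moreover have "x i \<in> verts (Gs i)" using x i by (auto simp: PiE_iff)
  ultimately have "a = x i" using a card_le_Suc0_iff_eq[OF finV[OF i]] by auto
  then show ?thesis by simp
qed

lemma coord_dep:
  assumes f: "automorphism P f" and x: "x \<in> PV" and y: "y \<in> PV" and e: "x l = y l"
  shows "f x l = f y l"
proof -
  have "\<And>J. J \<subseteq> I - {l} \<Longrightarrow> f (\<lambda>m. if m \<in> J then y m else x m) l = f x l"
  proof -
    fix J assume J: "J \<subseteq> I - {l}"
    have "finite J" using J finI finite_subset by blast
    then show "f (\<lambda>m. if m \<in> J then y m else x m) l = f x l" using J
    proof (induction J rule: finite_induct)
      case empty then show ?case by simp
    next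
      case (insert j J)
      let ?z = "\<lambda>m. if m \<in> J then y m else x m"
      have zPV: "?z \<in> PV" using mix_PV[OF y x] .
      have jI: "j \<in> I" "j \<noteq> l" using insert by auto
      have yj: "y j \<in> verts (Gs j)" using y jI by (auto simp: PiE_iff)
      have "?z(j := y j) = (\<lambda>m. if m \<in> insert j J then y m else x m)" by auto
      moreover have "f (?z(j := y j)) l = f ?z l" using coord_stable[OF f zPV jI(1) yj] jI(2) by metis
      ultimately show ?case using insert by simp
    qed
  qed
  from this[of "I - {l}"] have "f (\<lambda>m. if m \<in> I - {l} then y m else x m) l = f x l" by simp
  moreover have "(\<lambda>m. if m \<in> I - {l} then y m else x m) = y"
  proof
    fix m show "(if m \<in> I - {l} then y m else x m) = y m"
      using x y e by (cases "m \<in> I") (auto simp: PiE_iff extensional_def)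
  qed
  ultimately show ?thesis by simp
qed

end

context prodP begin

lemma PV_ne: "PV \<noteq> {}"
  using conG unfolding connected_graph_def by (auto simp: PiE_eq_empty_iff)

definition x0 where "x0 = (SOME x. x \<in> PV)"
lemma x0: "x0 \<in> PV" unfolding x0_def using PV_ne by (metis some_in_eq)

definition sig where "sig f l a = f (x0(l := a)) l"

lemma aut_PV: "automorphism P f \<Longrightarrow> x \<in> PV \<Longrightarrow> f x \<in> PV"
  using aut_bij bij_betw_apply by metis

lemma aut_sig: "automorphism P f \<Longrightarrow> x \<in> PV \<Longrightarrow> l \<in> I \<Longrightarrow> f x l = sig f l (x l)"
proof -
  assume f: "automorphism P f" and x: "x \<in> PV" and l: "l \<in> I"
  have xl: "x l \<in> verts (Gs l)" using x l by (auto simp: PiE_iff)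
  show ?thesis unfolding sig_def
    using coord_dep[OF f x PV_upd[OF x0 l xl], of l] by simp
qed

lemma adj_layer:
  assumes "y \<in> PV" "l \<in> I" "a \<in> verts (Gs l)" "b \<in> verts (Gs l)"
  shows "adj P (y(l := a)) (y(l := b)) \<longleftrightarrow> adj (Gs l) a b"
proof -
  have "adj (Gs l) a b \<longleftrightarrow> adj (induced P (layer y l)) (y(l := a)) (y(l := b))"
    using layer_iso[OF assms(1,2)] assms(3,4) unfolding graph_iso_def by blast
  also have "\<dots> \<longleftrightarrow> adj P (y(l := a)) (y(l := b))"
    unfolding adj_induced layer_def using assms(3,4) by blast
  finally show ?thesis by simp
qed

lemma f_upd:
  assumes f: "automorphism P f" and l: "l \<in> I" and a: "a \<in> verts (Gs l)"
  shows "f (x0(l := a)) = (f x0)(l := sig f l a)"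
proof (rule PV_eqI)
  show "f (x0(l := a)) \<in> PV" using aut_PV[OF f PV_upd[OF x0 l a]] .
  have "sig f l a \<in> verts (Gs l)" unfolding sig_def
    using aut_PV[OF f PV_upd[OF x0 l a]] l by (auto simp: PiE_iff)
  then show "(f x0)(l := sig f l a) \<in> PV" using PV_upd[OF aut_PV[OF f x0] l] by blast
  fix m assume m: "m \<in> I"
  show "f (x0(l := a)) m = ((f x0)(l := sig f l a)) m"
  proof (cases "m = l")
    case True then show ?thesis by (simp add: sig_def)
  next
    case False then show ?thesis using coord_stable[OF f x0 l a] by simp
  qed
qed

lemma sig_aut:
  assumes f: "automorphism P f" and l: "l \<in> I"
  shows "automorphism (Gs l) (sig f l)"
proof -
  have into: "sig f l ` verts (Gs l) \<subseteq> verts (Gs l)"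
    unfolding sig_def using aut_PV[OF f PV_upd[OF x0 l]] l by (auto simp: PiE_iff)
  have fi: "inj_on f PV" using aut_bij[OF f] bij_betw_imp_inj_on by blast
  have inj: "inj_on (sig f l) (verts (Gs l))"
  proof (rule inj_onI)
    fix a b assume ab: "a \<in> verts (Gs l)" "b \<in> verts (Gs l)" "sig f l a = sig f l b"
    then have "f (x0(l := a)) = f (x0(l := b))" using f_upd[OF f l] by simp
    then have "x0(l := a) = x0(l := b)" using fi PV_upd[OF x0 l] ab(1,2) inj_onD by metis
    from fun_cong[OF this, of l] show "a = b" by simp
  qed
  have bij: "bij_betw (sig f l) (verts (Gs l)) (verts (Gs l))"
    using endo_inj_surj[OF finV[OF l] into inj] inj by (simp add: bij_betw_def)
  have fiso: "\<forall>u\<in>PV. \<forall>v\<in>PV. adj P u v = adj P (f u) (f v)"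
    using f unfolding automorphism_def graph_iso_def verts_P by blast
  show ?thesis unfolding automorphism_def graph_iso_def
  proof (intro conjI ballI bij)
    fix a b assume ab: "a \<in> verts (Gs l)" "b \<in> verts (Gs l)"
    have sab: "sig f l a \<in> verts (Gs l)" "sig f l b \<in> verts (Gs l)" using into ab by auto
    have "adj (Gs l) a b = adj P (x0(l := a)) (x0(l := b))" using adj_layer[OF x0 l ab] by simp
    also have "\<dots> = adj P (f (x0(l := a))) (f (x0(l := b)))" using fiso PV_upd[OF x0 l] ab by blast
    also have "\<dots> = adj P ((f x0)(l := sig f l a)) ((f x0)(l := sig f l b))" using f_upd[OF f l] ab by simp
    also have "\<dots> = adj (Gs l) (sig f l a) (sig f l b)" using adj_layer[OF aut_PV[OF f x0] l sab] .
    finally show "adj (Gs l) a b = adj (Gs l) (sig f l a) (sig f l b)" .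
  qed
qed

end

definition nd :: "'a graph \<Rightarrow> nat \<Rightarrow> bool" where
  "nd H k \<longleftrightarrow> (\<exists>c. coloring_with H c k \<and> \<not> distinguishing H c)"

lemma thr_alt: "dist_threshold H = (LEAST t. t \<ge> 1 \<and> (\<forall>k\<ge>t. \<not> nd H k))"
  unfolding dist_threshold_def nd_def by meson

lemma nd_le: "graph H \<Longrightarrow> nd H k \<Longrightarrow> k \<le> card (verts H)"
  unfolding nd_def coloring_with_def graph_def using card_image_le by blast

lemma thr_props:
  assumes "graph H"
  shows "dist_threshold H \<ge> 1" "\<And>k. k \<ge> dist_threshold H \<Longrightarrow> \<not> nd H k"
proof -
  let ?Q = "\<lambda>t. t \<ge> 1 \<and> (\<forall>k\<ge>t. \<not> nd H k)"
  have "?Q (card (verts H) + 1)" using nd_le[OF assms] by fastforce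
  then have "?Q (dist_threshold H)" unfolding thr_alt by (rule LeastI)
  then show "dist_threshold H \<ge> 1" "\<And>k. k \<ge> dist_threshold H \<Longrightarrow> \<not> nd H k" by auto
qed

lemma thr_le: "t \<ge> 1 \<Longrightarrow> (\<And>k. k \<ge> t \<Longrightarrow> \<not> nd H k) \<Longrightarrow> dist_threshold H \<le> t"
  unfolding thr_alt by (rule Least_le) auto

lemma thr_gt: "graph H \<Longrightarrow> nd H k \<Longrightarrow> k < dist_threshold H"
  using thr_props(2) not_less by blast

lemma thr_nd:
  assumes "graph H" "dist_threshold H \<ge> 2"
  shows "\<exists>k\<ge>dist_threshold H - 1. nd H k"
proof (rule ccontr)
  assume "\<not> (\<exists>k\<ge>dist_threshold H - 1. nd H k)"
  then have "dist_threshold H \<le> dist_threshold H - 1" using assms(2) by (intro thr_le) auto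
  then show False using assms(2) by simp
qed

lemma nd_iso:
  assumes h: "graph_iso G H h" and n: "nd H k"
  shows "nd G k"
proof -
  obtain c where c: "card (c ` verts H) = k" and "\<not> distinguishing H c"
    using n unfolding nd_def coloring_with_def by blast
  then obtain f where fa: "automorphism H f"
    and fc: "\<forall>v\<in>verts H. c (f v) = c v" and fn: "\<not> (\<forall>v\<in>verts H. f v = v)"
    unfolding distinguishing_def by blast
  define g where "g = inv_into (verts G) h"
  have hb: "bij_betw h (verts G) (verts H)" using h unfolding graph_iso_def by blast
  have gi: "graph_iso H G g" unfolding g_def by (rule iso_inv[OF h])
  have gh: "\<And>v. v \<in> verts G \<Longrightarrow> g (h v) = v" unfolding g_def using hb by (simp add: bij_betw_imp_inj_on)
  have hg: "\<And>w. w \<in> verts H \<Longrightarrow> h (g w) = w" unfolding g_def using hb by (simp add: bij_betw_def f_inv_into_f)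
  have hv: "\<And>v. v \<in> verts G \<Longrightarrow> h v \<in> verts H" using hb bij_betw_apply by metis
  have fv: "\<And>w. w \<in> verts H \<Longrightarrow> f w \<in> verts H" using fa unfolding automorphism_def graph_iso_def
    using bij_betw_apply by metis
  define f' where "f' = g \<circ> f \<circ> h"
  have f'a: "automorphism G f'" unfolding automorphism_def f'_def
    using iso_comp[OF iso_comp[OF h fa[unfolded automorphism_def]] gi] by (simp add: comp_assoc)
  have "(c \<circ> h) ` verts G = c ` (h ` verts G)" by (simp add: image_comp)
  also have "h ` verts G = verts H" using hb by (simp add: bij_betw_def)
  finally have "(c \<circ> h) ` verts G = c ` verts H" .
  then have col: "coloring_with G (c \<circ> h) k" unfolding coloring_with_def using c by simp
  have pres: "\<forall>v\<in>verts G. (c \<circ> h) (f' v) = (c \<circ> h) v"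
    unfolding f'_def using hg fv hv fc by simp
  obtain w where w: "w \<in> verts H" "f w \<noteq> w" using fn by blast
  have "g w \<in> verts G" "f' (g w) \<noteq> g w"
  proof -
    show gw: "g w \<in> verts G" using gi w(1) unfolding graph_iso_def using bij_betw_apply by metis
    show "f' (g w) \<noteq> g w"
    proof
      assume "f' (g w) = g w"
      then have "h (f' (g w)) = h (g w)" by simp
      then have "f w = w" unfolding f'_def using hg w(1) fv by simp
      then show False using w(2) by simp
    qed
  qed
  then have "\<not> distinguishing G (c \<circ> h)" unfolding distinguishing_def using f'a pres by blast
  then show ?thesis unfolding nd_def using col by blast
qed

lemma thr_iso: "isomorphic G H \<Longrightarrow> dist_threshold G = dist_threshold H"
proof -
  assume "isomorphic G H"
  then obtain h h' where h1: "graph_iso G H h" and h2: "graph_iso H G h'"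
    unfolding isomorphic_def using iso_inv by blast
  have "nd G k = nd H k" for k using nd_iso[OF h1, of k] nd_iso[OF h2, of k] by blast
  then have "nd G = nd H" by (intro ext)
  then show ?thesis unfolding thr_alt by simp
qed

lemma funpow_in: "bij_betw s V V \<Longrightarrow> a \<in> V \<Longrightarrow> (s ^^ n) a \<in> V"
  by (induction n) (auto simp: bij_betw_apply)

lemma funpow_inj: "bij_betw s V V \<Longrightarrow> a \<in> V \<Longrightarrow> b \<in> V \<Longrightarrow> (s ^^ n) a = (s ^^ n) b \<Longrightarrow> a = b"
proof (induction n)
  case 0 then show ?case by simp
next
  case (Suc n)
  have "s ((s ^^ n) a) = s ((s ^^ n) b)" using Suc.prems(4) by simp
  then have "(s ^^ n) a = (s ^^ n) b"
    using funpow_in[OF Suc.prems(1)] Suc.prems(1-3) unfolding bij_betw_def by (meson inj_on_def)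
  then show ?case using Suc by blast
qed

lemma period:
  assumes fin: "finite V" and s: "bij_betw s V V" and a: "a \<in> V"
  shows "\<exists>p>0. (s ^^ p) a = a"
proof -
  let ?F = "\<lambda>n. (s ^^ n) a"
  have "?F ` {..card V} \<subseteq> V" using funpow_in[OF s a] by auto
  then have "card (?F ` {..card V}) \<le> card V" using fin card_mono by blast
  then have "\<not> inj_on ?F {..card V}" using card_image by fastforce
  then obtain i j where ij: "i \<noteq> j" "?F i = ?F j" unfolding inj_on_def by blast
  have "\<exists>i j. i < j \<and> ?F i = ?F j" using ij by (metis linorder_neqE_nat)
  then obtain i j where ij: "i < j" "?F i = ?F j" by blast
  have "(s ^^ i) ((s ^^ (j - i)) a) = (s ^^ j) a"
    using ij(1) by (metis funpow_add comp_apply le_add_diff_inverse less_imp_le_nat)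
  then have "(s ^^ i) ((s ^^ (j - i)) a) = (s ^^ i) a" using ij(2) by simp
  then have "(s ^^ (j - i)) a = a" using funpow_inj[OF s funpow_in[OF s a] a] by blast
  then show ?thesis using ij(1) by (intro exI[of _ "j - i"]) simp
qed

lemma orbit_rep:
  fixes s :: "'a \<Rightarrow> 'a"
  assumes fin: "finite V" and s: "bij_betw s V V"
  shows "\<exists>r. (\<forall>a\<in>V. \<exists>n. r a = (s ^^ n) a) \<and> (\<forall>a\<in>V. r (s a) = r a)"
proof -
  define Orb where "Orb a = range (\<lambda>n. (s ^^ n) a)" for a
  define r where "r a = (SOME b. b \<in> Orb a)" for a
  have rO: "r a \<in> Orb a" for a unfolding r_def Orb_def by (rule someI[where x=a]) (metis funpow_0 rangeI)
  have Os: "Orb (s a) = Orb a" if a: "a \<in> V" for a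
  proof
    show "Orb (s a) \<subseteq> Orb a" unfolding Orb_def
    proof
      fix b assume "b \<in> range (\<lambda>n. (s ^^ n) (s a))"
      then obtain n where "b = (s ^^ n) (s a)" by blast
      then have "b = (s ^^ Suc n) a" by (simp add: funpow_Suc_right del: funpow.simps)
      then show "b \<in> range (\<lambda>n. (s ^^ n) a)" by blast
    qed
    obtain p where p: "p > 0" "(s ^^ p) a = a" using period[OF fin s a] by blast
    show "Orb a \<subseteq> Orb (s a)" unfolding Orb_def
    proof
      fix b assume "b \<in> range (\<lambda>n. (s ^^ n) a)"
      then obtain n where b: "b = (s ^^ n) a" by blast
      have "(s ^^ (n + p - 1)) (s a) = (s ^^ (n + p)) a"
        using p(1) by (metis Suc_diff_1 add_gr_0 comp_apply funpow_Suc_right add_Suc_right)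
      also have "\<dots> = (s ^^ n) ((s ^^ p) a)" by (simp add: funpow_add)
      also have "\<dots> = b" using p(2) b by simp
      finally show "b \<in> range (\<lambda>n. (s ^^ n) (s a))" by (metis rangeI)
    qed
  qed
  show ?thesis
  proof (intro exI[of _ r] conjI ballI)
    fix a assume "a \<in> V"
    show "\<exists>n. r a = (s ^^ n) a" using rO[of a] unfolding Orb_def by blast
    show "r (s a) = r a" unfolding r_def using Os[OF \<open>a \<in> V\<close>] by simp
  qed
qed

context prodP begin

lemma card_slice:
  assumes l: "l \<in> I" and R: "R \<subseteq> verts (Gs l)"
  shows "card {x \<in> PV. x l \<in> R} = card R * card (PiE (I - {l}) (\<lambda>i. verts (Gs i)))"
proof -
  have "{x \<in> PV. x l \<in> R} = PiE I (\<lambda>m. if m = l then R else verts (Gs m))"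
    using R l by (auto simp: PiE_iff extensional_def split: if_splits) (metis subsetD)
  then have "card {x \<in> PV. x l \<in> R} = (\<Prod>m\<in>I. card (if m = l then R else verts (Gs m)))"
    using card_PiE[OF finI] by simp
  also have "\<dots> = card R * (\<Prod>m\<in>I - {l}. card (if m = l then R else verts (Gs m)))"
    using prod.remove[OF finI l, of "\<lambda>m. card (if m = l then R else verts (Gs m))"] by simp
  also have "(\<Prod>m\<in>I - {l}. card (if m = l then R else verts (Gs m))) = (\<Prod>m\<in>I - {l}. card (verts (Gs m)))"
    by (rule prod.cong) auto
  also have "\<dots> = card (PiE (I - {l}) (\<lambda>i. verts (Gs i)))"
    by (subst card_PiE) (use finI in auto)
  finally show ?thesis .
qed

lemma orbit_bound:
  assumes f: "automorphism P f" and C: "\<forall>x\<in>PV. C (f x) = C x" and l: "l \<in> I"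
    and a: "a \<in> verts (Gs l)" "sig f l a \<noteq> a"
  shows "card (C ` PV) \<le> (dist_threshold (Gs l) - 1) * card (PiE (I - {l}) (\<lambda>i. verts (Gs i)))"
proof -
  let ?s = "sig f l" and ?V = "verts (Gs l)" and ?N = "card (PiE (I - {l}) (\<lambda>i. verts (Gs i)))"
  have sa: "automorphism (Gs l) ?s" by (rule sig_aut[OF f l])
  have sb: "bij_betw ?s ?V ?V" using sa unfolding automorphism_def graph_iso_def by blast
  obtain r where r1: "\<forall>b\<in>?V. \<exists>n. r b = (?s ^^ n) b" and r2: "\<forall>b\<in>?V. r (?s b) = r b"
    using orbit_rep[OF finV[OF l] sb] by blast
  define R where "R = r ` ?V"
  have RV: "R \<subseteq> ?V" unfolding R_def using r1 funpow_in[OF sb] by force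
  have finR: "finite R" unfolding R_def using finV[OF l] by simp
  obtain g where g: "bij_betw g R {0..<card R}" using ex_bij_betw_finite_nat[OF finR] by blast
  define c where "c = g \<circ> r"
  have "c ` ?V = g ` R" unfolding c_def R_def by (simp add: image_comp)
  then have cc: "coloring_with (Gs l) c (card R)" unfolding coloring_with_def using g
    by (simp add: bij_betw_def)
  have "\<not> distinguishing (Gs l) c" unfolding distinguishing_def
    using sa r2 a unfolding c_def by auto
  then have "nd (Gs l) (card R)" unfolding nd_def using cc by blast
  then have cR: "card R \<le> dist_threshold (Gs l) - 1" using thr_gt[OF grG[OF l]] by fastforce
  have iter: "(f ^^ n) y \<in> PV \<and> C ((f ^^ n) y) = C y \<and> ((f ^^ n) y) l = (?s ^^ n) (y l)" if y: "y \<in> PV" for y n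
  proof (induction n)
    case 0 then show ?case using y by simp
  next
    case (Suc n)
    then show ?case using aut_PV[OF f] C aut_sig[OF f _ l] by simp
  qed
  have sub: "C ` PV \<subseteq> C ` {x \<in> PV. x l \<in> R}"
  proof
    fix z assume "z \<in> C ` PV"
    then obtain y where y: "y \<in> PV" "z = C y" by blast
    have yl: "y l \<in> ?V" using y l by (auto simp: PiE_iff)
    then obtain n where "r (y l) = (?s ^^ n) (y l)" using r1 by blast
    moreover have "r (y l) \<in> R" unfolding R_def using yl by blast
    ultimately have "(f ^^ n) y \<in> {x \<in> PV. x l \<in> R}" "C ((f ^^ n) y) = z"
      using iter[OF y(1), of n] y(2) by auto
    then show "z \<in> C ` {x \<in> PV. x l \<in> R}" by (intro image_eqI[where x="(f ^^ n) y"]) auto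
  qed
  have "card (C ` PV) \<le> card (C ` {x \<in> PV. x l \<in> R})"
    by (rule card_mono[OF _ sub]) (use finPV in auto)
  also have "\<dots> \<le> card {x \<in> PV. x l \<in> R}" by (rule card_image_le) (use finPV in auto)
  also have "\<dots> = card R * ?N" by (rule card_slice[OF l RV])
  also have "\<dots> \<le> (dist_threshold (Gs l) - 1) * ?N" using cR by (rule mult_le_mono1)
  finally show ?thesis .
qed

end

context prodP begin

lemma nd_lift:
  assumes l: "l \<in> I" and n: "nd (Gs l) k"
  shows "nd P (k * card (PiE (I - {l}) (\<lambda>i. verts (Gs i))))"
proof -
  let ?V = "verts (Gs l)"
  define Q where "Q = PiE (I - {l}) (\<lambda>i. verts (Gs i))"
  obtain c where c: "card (c ` ?V) = k" and "\<not> distinguishing (Gs l) c"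
    using n unfolding nd_def coloring_with_def by blast
  then obtain s where sa: "automorphism (Gs l) s"
    and sc: "\<forall>v\<in>?V. c (s v) = c v" and sn: "\<not> (\<forall>v\<in>?V. s v = v)"
    unfolding distinguishing_def by blast
  have sb: "bij_betw s ?V ?V" using sa unfolding automorphism_def graph_iso_def by blast
  have sadj: "\<And>a b. a \<in> ?V \<Longrightarrow> b \<in> ?V \<Longrightarrow> adj (Gs l) (s a) (s b) = adj (Gs l) a b"
    using sa unfolding automorphism_def graph_iso_def by blast
  have sinj: "\<And>a b. a \<in> ?V \<Longrightarrow> b \<in> ?V \<Longrightarrow> (s a = s b) = (a = b)"
    using sb unfolding bij_betw_def by (meson inj_on_eq_iff)
  have sV: "\<And>a. a \<in> ?V \<Longrightarrow> s a \<in> ?V" using sb bij_betw_apply by metis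
  have finQ: "finite Q" unfolding Q_def using finV finI by (auto intro!: finite_PiE)
  obtain g where g: "bij_betw g Q {0..<card Q}" using ex_bij_betw_finite_nat[OF finQ] by blast
  define C where "C x = prod_encode (c (x l), g (x(l := undefined)))" for x :: "nat \<Rightarrow> 'a"
  have xQ: "x(l := undefined) \<in> Q" if "x \<in> PV" for x
    using that unfolding Q_def by (auto simp: PiE_iff extensional_def)
  have xl: "x l \<in> ?V" if "x \<in> PV" for x using that l by (auto simp: PiE_iff)
  have img: "C ` PV = prod_encode ` (c ` ?V \<times> g ` Q)"
  proof
    show "C ` PV \<subseteq> prod_encode ` (c ` ?V \<times> g ` Q)" unfolding C_def using xQ xl by blast
    show "prod_encode ` (c ` ?V \<times> g ` Q) \<subseteq> C ` PV"
    proof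
      fix z assume "z \<in> prod_encode ` (c ` ?V \<times> g ` Q)"
      then obtain a q where aq: "a \<in> ?V" "q \<in> Q" "z = prod_encode (c a, g q)" by blast
      have x: "q(l := a) \<in> PV" using aq(1,2) l unfolding Q_def by (auto simp: PiE_iff extensional_def)
      have "q l = undefined" using aq(2) unfolding Q_def by (auto simp: PiE_iff extensional_def)
      then have "(q(l := a))(l := undefined) = q" by auto
      then have "C (q(l := a)) = z" unfolding C_def using aq(3) by simp
      then show "z \<in> C ` PV" using x by blast
    qed
  qed
  have "card (C ` PV) = card (c ` ?V \<times> g ` Q)" unfolding img by (rule card_image[OF inj_prod_encode])
  also have "\<dots> = k * card Q" using c g by (simp add: card_cartesian_product bij_betw_def)
  finally have col: "coloring_with P C (k * card Q)" unfolding coloring_with_def verts_P .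
  define S where "S x = x(l := s (x l))" for x :: "nat \<Rightarrow> 'a"
  have SPV: "S x \<in> PV" if "x \<in> PV" for x unfolding S_def using PV_upd[OF that l sV[OF xl[OF that]]] .
  have Sinj: "inj_on S PV"
  proof (rule inj_onI)
    fix x y assume xy: "x \<in> PV" "y \<in> PV" "S x = S y"
    then have "s (x l) = s (y l)" unfolding S_def by (metis fun_upd_same)
    then have "x l = y l" using sinj xl xy(1,2) by blast
    moreover have "x m = y m" if "m \<noteq> l" for m using fun_cong[OF xy(3), of m] that unfolding S_def by simp
    ultimately show "x = y" by (metis ext)
  qed
  have Sbij: "bij_betw S PV PV" using endo_inj_surj[OF finPV _ Sinj] SPV Sinj
    by (auto simp: bij_betw_def)
  have Sadj: "adj P x y = adj P (S x) (S y)" if xy: "x \<in> PV" "y \<in> PV" for x y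
  proof -
    have A: "\<And>m. m \<in> I \<Longrightarrow> adj (Gs m) (S x m) (S y m) = adj (Gs m) (x m) (y m)"
      unfolding S_def using sadj xl xy by auto
    have E: "\<And>m. m \<in> I \<Longrightarrow> (S x m = S y m) = (x m = y m)"
      unfolding S_def using sinj xl xy by auto
    have "(\<exists>i\<in>I. adj (Gs i) (S x i) (S y i) \<and> (\<forall>j\<in>I. j \<noteq> i \<longrightarrow> S x j = S y j)) =
          (\<exists>i\<in>I. adj (Gs i) (x i) (y i) \<and> (\<forall>j\<in>I. j \<noteq> i \<longrightarrow> x j = y j))"
      using A E by (meson)
    then show ?thesis unfolding adj_P using xy SPV by simp
  qed
  have Saut: "automorphism P S" unfolding automorphism_def graph_iso_def verts_P
    using Sbij Sadj by blast
  have Spres: "\<forall>x\<in>verts P. C (S x) = C x"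
  proof
    fix x assume "x \<in> verts P"
    then have x: "x \<in> PV" using verts_P by simp
    have "(S x)(l := undefined) = x(l := undefined)" unfolding S_def by simp
    moreover have "c (S x l) = c (x l)" unfolding S_def using sc xl[OF x] by simp
    ultimately show "C (S x) = C x" unfolding C_def by simp
  qed
  obtain v where v: "v \<in> ?V" "s v \<noteq> v" using sn by blast
  have "x0(l := v) \<in> PV" using PV_upd[OF x0 l v(1)] .
  moreover have "S (x0(l := v)) \<noteq> x0(l := v)"
  proof
    assume "S (x0(l := v)) = x0(l := v)"
    from fun_cong[OF this, of l] show False using v(2) unfolding S_def by simp
  qed
  ultimately have "\<not> distinguishing P C" unfolding distinguishing_def verts_P
    using Saut Spres[unfolded verts_P] by blast
  then show ?thesis unfolding nd_def Q_def[symmetric] using col by blast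
qed

end

context prodP begin

lemma verts_sub: "verts (cart_prod_family Gs (I - {i})) = PiE (I - {i}) (\<lambda>i. verts (Gs i))"
  by (simp add: cart_prod_family_def verts_def)

theorem thr_main:
  assumes ne: "I \<noteq> {}"
  shows "dist_threshold P =
     Max ((\<lambda>i. (dist_threshold (Gs i) - 1) * card (verts (cart_prod_family Gs (I - {i})))) ` I) + 1"
proof -
  define T where "T i = (dist_threshold (Gs i) - 1) * card (verts (cart_prod_family Gs (I - {i})))" for i
  define M where "M = Max (T ` I)"
  have finT: "finite (T ` I)" using finI by simp
  have neT: "T ` I \<noteq> {}" using ne by simp
  have TM: "\<And>i. i \<in> I \<Longrightarrow> T i \<le> M" unfolding M_def using Max_ge[OF finT] by blast
  obtain i0 where i0: "i0 \<in> I" "M = T i0" unfolding M_def using Max_in[OF finT neT] by blast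
  have le: "dist_threshold P \<le> M + 1"
  proof (rule thr_le)
    show "1 \<le> M + 1" by simp
    fix k assume k: "M + 1 \<le> k"
    show "\<not> nd P k"
    proof
      assume "nd P k"
      then obtain C where C: "card (C ` PV) = k" and "\<not> distinguishing P C"
        unfolding nd_def coloring_with_def verts_P by blast
      then obtain f where f: "automorphism P f" and fC: "\<forall>x\<in>PV. C (f x) = C x"
        and fn: "\<not> (\<forall>x\<in>PV. f x = x)"
        unfolding distinguishing_def verts_P by blast
      have "\<exists>l\<in>I. \<exists>a\<in>verts (Gs l). sig f l a \<noteq> a"
      proof (rule ccontr)
        assume "\<not> (\<exists>l\<in>I. \<exists>a\<in>verts (Gs l). sig f l a \<noteq> a)"
        then have h: "\<And>l a. l \<in> I \<Longrightarrow> a \<in> verts (Gs l) \<Longrightarrow> sig f l a = a" by blast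
        have "f x = x" if x: "x \<in> PV" for x
        proof (rule PV_eqI[OF aut_PV[OF f x] x])
          fix l assume l: "l \<in> I"
          have "x l \<in> verts (Gs l)" using x l by (auto simp: PiE_iff)
          then show "f x l = x l" using aut_sig[OF f x l] h[OF l] by simp
        qed
        then show False using fn by blast
      qed
      then obtain l a where l: "l \<in> I" "a \<in> verts (Gs l)" "sig f l a \<noteq> a" by blast
      have "k \<le> T l" using orbit_bound[OF f fC l] C unfolding T_def verts_sub by simp
      then show False using TM[OF l(1)] k by simp
    qed
  qed
  have ge: "T i < dist_threshold P" if i: "i \<in> I" for i
  proof (cases "dist_threshold (Gs i) \<ge> 2")
    case False
    then have "T i = 0" unfolding T_def by simp
    then show ?thesis using thr_props(1)[OF graph_P] by simp
  next
    case True
    obtain k where k: "k \<ge> dist_threshold (Gs i) - 1" "nd (Gs i) k" using thr_nd[OF grG[OF i] True] by blast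
    have "nd P (k * card (PiE (I - {i}) (\<lambda>i. verts (Gs i))))" by (rule nd_lift[OF i k(2)])
    then have "k * card (PiE (I - {i}) (\<lambda>i. verts (Gs i))) < dist_threshold P" by (rule thr_gt[OF graph_P])
    moreover have "T i \<le> k * card (PiE (I - {i}) (\<lambda>i. verts (Gs i)))"
      unfolding T_def verts_sub using k(1) by (rule mult_le_mono1)
    ultimately show ?thesis by simp
  qed
  have "M < dist_threshold P" using ge[OF i0(1)] i0(2) by simp
  then have "dist_threshold P = M + 1" using le by simp
  then show ?thesis unfolding M_def T_def by simp
qed

end

theorem theorem4p1:
  fixes G :: "'b graph" and Gs :: "nat \<Rightarrow> 'a graph" and k :: nat
  assumes "k \<ge> 2"
    and "graph G"
    and "\<forall>i\<in>{1..k}. graph (Gs i) \<and> connected_graph (Gs i) \<and> prime_graph (Gs i)"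
    and "\<forall>i\<in>{1..k}. \<forall>j\<in>{1..k}. i \<noteq> j \<longrightarrow> \<not> isomorphic (Gs i) (Gs j)"
    and "isomorphic G (cart_prod_family Gs {1..k})"
  shows "dist_threshold G =
     Max ((\<lambda>i. (dist_threshold (Gs i) - 1) * card (verts (cart_prod_family Gs ({1..k} - {i}))))
          ` {1..k}) + 1"
proof -
  interpret prodP Gs "{1..k}"
    by unfold_locales (use assms(3,4) in auto)
  have "dist_threshold G = dist_threshold (cart_prod_family Gs {1..k})" by (rule thr_iso[OF assms(5)])
  also have "\<dots> = Max ((\<lambda>i. (dist_threshold (Gs i) - 1) * card (verts (cart_prod_family Gs ({1..k} - {i}))))
          ` {1..k}) + 1" by (rule thr_main) (use assms(1) in auto)
  finally show ?thesis .
qed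

end
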